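(* Let $x\in\mathbb{R}^n$ and let $m(y)=c+g^T(y-x)+\tfrac12(y-x)^TH(y-x)$ with $c\in\mathbb{R}$, $g\in\mathbb{R}^n$, $H\in\mathbb{R}^{n\times n}$ symmetric. Let $\Delta>0$. (a) Suppose $f:\mathbb{R}^n\to\mathbb{R}$ is bounded below and continuously differentiable with $\nabla f$ Lipschitz with constant $L_{\nabla f}$, and there is $\kappa>0$ with $|m(y)-f(x)-\nabla f(x)^T(y-x)|\le\kappa\Delta^2$ for all $y\in B(x,\Delta)$. Then for every $\kappa_H\ge\|H\|$, for all $y\in B(x,\Delta)$: $|m(y)-f(y)|\le\kappa_{\mathrm{mf}}\Delta^2$ and $\|\nabla m(y)-\nabla f(y)\|\le\kappa_{\mathrm{mg}}\Delta$, where $\kappa_{\mathrm{mf}}=\kappa+\frac{L_{\nabla f}}{2}$ and $\kappa_{\mathrm{mg}}=2\kappa+L_{\nabla f}+2\kappa_H$. (b) Suppose $f:\mathbb{R}^n\to\mathbb{R}$ is bounded below and twice continuously differentiable with $\nabla^2 f$ Lipschitz with constant $L_{\nabla^2 f}$, and there is $\kappa>0$ with $\left|m(y)-f(x)-\nabla f(x)^T(y-x)-\tfrac12(y-x)^T\nabla^2 f(x)(y-x)\right|\le\kappa\Delta^3$ for all $y\in B(x,\Delta)$. Then for all $y\in B(x,\Delta)$: $|m(y)-f(y)|\le\kappa_{\mathrm{mf}}\Delta^3$, $\|\nabla m(y)-\nabla f(y)\|\le\kappa_{\mathrm{mg}}\Delta^2$, $\|\nabla^2 m(y)-\nabla^2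 f(y)\|\le\kappa_{\mathrm{mh}}\Delta$, with $\kappa_{\mathrm{mf}}=\kappa+\frac{L_{\nabla^2 f}}{6}$, $\kappa_{\mathrm{mg}}=34\kappa+\frac{L_{\nabla^2 f}}{2}$, $\kappa_{\mathrm{mh}}=24\kappa+L_{\nabla^2 f}$.
   Context: Norms are Euclidean (operator 2-norm for matrices); $B(x,\Delta)=\{y:\|y-x\|\le\Delta\}$. *)

theory Defs
  imports "HOL-Analysis.Analysis"
begin

text \<open>Operator 2-norm of a square matrix (the library norm on real^'n^'n is Frobenius).\<close>
definition mat_opnorm :: "real^'n^'n \<Rightarrow> real" where
  "mat_opnorm A = onorm (\<lambda>v. A *v v)"

definition qmodel :: "real \<Rightarrow> real^'n \<Rightarrow> real^'n^'n \<Rightarrow> real^'n \<Rightarrow> real^'n \<Rightarrow> real" where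
  "qmodel c g H x y = c + g \<bullet> (y - x) + (1/2) * ((y - x) \<bullet> (H *v (y - x)))"

text \<open>Gradient of the model (valid for symmetric H): g + H(y-x); its Hessian is H.\<close>
definition qmodel_grad :: "real^'n \<Rightarrow> real^'n^'n \<Rightarrow> real^'n \<Rightarrow> real^'n \<Rightarrow> real^'n" where
  "qmodel_grad g H x y = g + H *v (y - x)"

end

theory Submission
  imports Defs
begin



lemma mono_bound:
  fixes \<rho> B \<rho>' B' :: "real \<Rightarrow> real"
  assumes ab: "a \<le> b"
    and d1: "\<And>t. a \<le> t \<Longrightarrow> t \<le> b \<Longrightarrow> (\<rho> has_real_derivative \<rho>' t) (at t)"
    and d2: "\<And>t. a \<le> t \<Longrightarrow> t \<le> b \<Longrightarrow> (B has_real_derivative B' t) (at t)"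
    and le: "\<And>t. a \<le> t \<Longrightarrow> t \<le> b \<Longrightarrow> \<bar>\<rho>' t\<bar> \<le> B' t"
  shows "\<bar>\<rho> b - \<rho> a\<bar> \<le> B b - B a"
proof -
  have "(\<lambda>t. B t - \<rho> t) a \<le> (\<lambda>t. B t - \<rho> t) b"
    apply (rule DERIV_nonneg_imp_nondecreasing[OF ab])
    subgoal for t
      apply (rule exI[of _ "B' t - \<rho>' t"])
      using d1[of t] d2[of t] le[of t] by (auto intro!: DERIV_diff)
    done
  moreover have "(\<lambda>t. B t + \<rho> t) a \<le> (\<lambda>t. B t + \<rho> t) b"
    apply (rule DERIV_nonneg_imp_nondecreasing[OF ab])
    subgoal for t
      apply (rule exI[of _ "B' t + \<rho>' t"])
      using d1[of t] d2[of t] le[of t] by (auto intro!: DERIV_add)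
    done
  ultimately show ?thesis by auto
qed

lemma line_deriv:
  fixes F :: "real^'n \<Rightarrow> 'b::real_normed_vector"
  assumes "(F has_derivative F') (at (x + t *\<^sub>R d))"
  shows "((\<lambda>s. F (x + s *\<^sub>R d)) has_derivative (\<lambda>h. F' (h *\<^sub>R d))) (at t)"
proof -
  have "((\<lambda>s. x + s *\<^sub>R d) has_derivative (\<lambda>h. h *\<^sub>R d)) (at t)"
    by (auto intro!: derivative_eq_intros)
  from has_derivative_compose[OF this assms] show ?thesis by (simp add: o_def)
qed

lemma line_deriv_real:
  fixes F :: "real^'n \<Rightarrow> real"
  assumes "(F has_derivative (\<lambda>h. G \<bullet> h)) (at (x + t *\<^sub>R d))"
  shows "((\<lambda>s. F (x + s *\<^sub>R d)) has_real_derivative (G \<bullet> d)) (at t)"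
proof -
  have "((\<lambda>s. F (x + s *\<^sub>R d)) has_derivative (\<lambda>h. G \<bullet> (h *\<^sub>R d))) (at t)"
    using line_deriv[OF assms] .
  moreover have "(\<lambda>h. G \<bullet> (h *\<^sub>R d)) = (\<lambda>h. (G \<bullet> d) * h)" by (auto simp: algebra_simps)
  ultimately show ?thesis by (simp add: has_field_derivative_def)
qed

lemma line_deriv_grad:
  fixes F :: "real^'n \<Rightarrow> real^'n"
  assumes "(F has_derivative (\<lambda>h. M *v h)) (at (x + t *\<^sub>R d))"
  shows "((\<lambda>s. F (x + s *\<^sub>R d) \<bullet> u) has_real_derivative ((M *v d) \<bullet> u)) (at t)"
proof -
  have "((\<lambda>s. F (x + s *\<^sub>R d)) has_derivative (\<lambda>h. M *v (h *\<^sub>R d))) (at t)"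
    using line_deriv[OF assms] .
  from bounded_linear.has_derivative[OF bounded_linear_inner_left this]
  have "((\<lambda>s. F (x + s *\<^sub>R d) \<bullet> u) has_derivative (\<lambda>h. (M *v (h *\<^sub>R d)) \<bullet> u)) (at t)" .
  moreover have "(\<lambda>h. (M *v (h *\<^sub>R d)) \<bullet> u) = (\<lambda>h. ((M *v d) \<bullet> u) * h)"
    by (auto simp: algebra_simps)
  ultimately show ?thesis by (simp add: has_field_derivative_def)
qed

lemma opnorm_bound: "norm (A *v v) \<le> mat_opnorm A * norm v"
  unfolding mat_opnorm_def by (rule onorm) simp

lemma opnorm_nonneg: "0 \<le> mat_opnorm A"
  unfolding mat_opnorm_def by (rule onorm_pos_le) simp

lemma vec1_ne: "norm (vec 1 :: real^'n) > 0"
  by (simp add: vec_eq_iff)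



lemma taylor1:
  fixes f :: "real^'n \<Rightarrow> real"
  assumes df: "\<forall>y. (f has_derivative (\<lambda>h. gradf y \<bullet> h)) (at y)"
    and lip: "\<forall>y z. norm (gradf y - gradf z) \<le> L * norm (y - z)"
  shows "\<bar>f (x + d) - f x - gradf x \<bullet> d\<bar> \<le> L / 2 * norm d ^ 2"
proof -
  define \<rho> where "\<rho> t = f (x + t *\<^sub>R d) - t * (gradf x \<bullet> d)" for t
  define B where "B t = L * norm d ^ 2 * t ^ 2 / 2" for t
  have "\<bar>\<rho> 1 - \<rho> 0\<bar> \<le> B 1 - B 0"
  proof (rule mono_bound[where \<rho>'="\<lambda>t. gradf (x + t *\<^sub>R d) \<bullet> d - gradf x \<bullet> d"
        and B'="\<lambda>t. L * norm d ^ 2 * t"])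
    fix t :: real assume t: "0 \<le> t" "t \<le> 1"
    show "(\<rho> has_real_derivative gradf (x + t *\<^sub>R d) \<bullet> d - gradf x \<bullet> d) (at t)"
      unfolding \<rho>_def
      by (rule derivative_eq_intros line_deriv_real df[rule_format] | simp)+
    show "(B has_real_derivative L * norm d ^ 2 * t) (at t)"
      unfolding B_def by (rule derivative_eq_intros | simp)+
    have "\<bar>gradf (x + t *\<^sub>R d) \<bullet> d - gradf x \<bullet> d\<bar> = \<bar>(gradf (x + t *\<^sub>R d) - gradf x) \<bullet> d\<bar>"
      by (simp add: inner_diff_left)
    also have "\<dots> \<le> norm (gradf (x + t *\<^sub>R d) - gradf x) * norm d"
      by (rule Cauchy_Schwarz_ineq2)
    also have "\<dots> \<le> L * norm (t *\<^sub>R d) * norm d"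
      using lip[rule_format, of "x + t *\<^sub>R d" x] by (intro mult_right_mono) auto
    also have "\<dots> = L * norm d ^ 2 * t" using t by (simp add: power2_eq_square)
    finally show "\<bar>gradf (x + t *\<^sub>R d) \<bullet> d - gradf x \<bullet> d\<bar> \<le> L * norm d ^ 2 * t" .
  qed simp
  then show ?thesis by (simp add: \<rho>_def B_def algebra_simps)
qed

lemma taylor2_grad:
  fixes gradf :: "real^'n \<Rightarrow> real^'n"
  assumes dg: "\<forall>y. (gradf has_derivative (\<lambda>h. hessf y *v h)) (at y)"
    and lip: "\<forall>y z. mat_opnorm (hessf y - hessf z) \<le> L * norm (y - z)"
    and L: "L \<ge> 0"
  shows "norm (gradf (x + d) - gradf x - hessf x *v d) \<le> L / 2 * norm d ^ 2"
proof -
  define e where "e = gradf (x + d) - gradf x - hessf x *v d"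
  define \<rho> where "\<rho> t = gradf (x + t *\<^sub>R d) \<bullet> e - t * ((hessf x *v d) \<bullet> e)" for t
  define B where "B t = L * norm d ^ 2 * norm e * t ^ 2 / 2" for t
  have "\<bar>\<rho> 1 - \<rho> 0\<bar> \<le> B 1 - B 0"
  proof (rule mono_bound[where \<rho>'="\<lambda>t. (hessf (x + t *\<^sub>R d) *v d) \<bullet> e - (hessf x *v d) \<bullet> e"
        and B'="\<lambda>t. L * norm d ^ 2 * norm e * t"])
    fix t :: real assume t: "0 \<le> t" "t \<le> 1"
    show "(\<rho> has_real_derivative (hessf (x + t *\<^sub>R d) *v d) \<bullet> e - (hessf x *v d) \<bullet> e) (at t)"
      unfolding \<rho>_def
      by (rule derivative_eq_intros line_deriv_grad dg[rule_format] | simp)+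
    show "(B has_real_derivative L * norm d ^ 2 * norm e * t) (at t)"
      unfolding B_def by (rule derivative_eq_intros | simp)+
    have "\<bar>(hessf (x + t *\<^sub>R d) *v d) \<bullet> e - (hessf x *v d) \<bullet> e\<bar>
        = \<bar>((hessf (x + t *\<^sub>R d) - hessf x) *v d) \<bullet> e\<bar>"
      by (simp add: inner_diff_left matrix_vector_mult_diff_rdistrib)
    also have "\<dots> \<le> norm ((hessf (x + t *\<^sub>R d) - hessf x) *v d) * norm e"
      by (rule Cauchy_Schwarz_ineq2)
    also have "\<dots> \<le> (mat_opnorm (hessf (x + t *\<^sub>R d) - hessf x) * norm d) * norm e"
      by (intro mult_right_mono opnorm_bound) auto
    also have "\<dots> \<le> (L * norm (t *\<^sub>R d) * norm d) * norm e"
      using lip[rule_format, of "x + t *\<^sub>R d" x] by (intro mult_right_mono) auto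
    also have "\<dots> = L * norm d ^ 2 * norm e * t" using t by (simp add: power2_eq_square)
    finally show "\<bar>(hessf (x + t *\<^sub>R d) *v d) \<bullet> e - (hessf x *v d) \<bullet> e\<bar> \<le> L * norm d ^ 2 * norm e * t" .
  qed simp
  moreover have "\<rho> 1 - \<rho> 0 = norm e ^ 2"
    by (simp add: \<rho>_def e_def inner_diff_left power2_norm_eq_inner)
  ultimately have "norm e ^ 2 \<le> L / 2 * norm d ^ 2 * norm e" by (simp add: B_def)
  then have "norm e \<le> L / 2 * norm d ^ 2"
    using L by (cases "norm e = 0") (auto simp: power2_eq_square)
  then show ?thesis by (simp add: e_def)
qed

lemma taylor2:
  fixes f :: "real^'n \<Rightarrow> real"
  assumes df: "\<forall>y. (f has_derivative (\<lambda>h. gradf y \<bullet> h)) (at y)"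
    and dg: "\<forall>y. (gradf has_derivative (\<lambda>h. hessf y *v h)) (at y)"
    and lip: "\<forall>y z. mat_opnorm (hessf y - hessf z) \<le> L * norm (y - z)"
    and L: "L \<ge> 0"
  shows "\<bar>f (x + d) - f x - gradf x \<bullet> d - (1/2) * (d \<bullet> (hessf x *v d))\<bar> \<le> L / 6 * norm d ^ 3"
proof -
  define \<rho> where "\<rho> t = f (x + t *\<^sub>R d) - t * (gradf x \<bullet> d) - t^2/2 * (d \<bullet> (hessf x *v d))" for t
  define B where "B t = L * norm d ^ 3 * t ^ 3 / 6" for t
  have "\<bar>\<rho> 1 - \<rho> 0\<bar> \<le> B 1 - B 0"
  proof (rule mono_bound[where \<rho>'="\<lambda>t. gradf (x + t *\<^sub>R d) \<bullet> d - gradf x \<bullet> d - t * (d \<bullet> (hessf x *v d))"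
        and B'="\<lambda>t. L * norm d ^ 3 * t^2 / 2"])
    fix t :: real assume t: "0 \<le> t" "t \<le> 1"
    show "(\<rho> has_real_derivative gradf (x + t *\<^sub>R d) \<bullet> d - gradf x \<bullet> d - t * (d \<bullet> (hessf x *v d))) (at t)"
      unfolding \<rho>_def
      by (rule derivative_eq_intros line_deriv_real df[rule_format] | simp)+
    show "(B has_real_derivative L * norm d ^ 3 * t^2 / 2) (at t)"
      unfolding B_def by (rule derivative_eq_intros | simp)+
    have "\<bar>gradf (x + t *\<^sub>R d) \<bullet> d - gradf x \<bullet> d - t * (d \<bullet> (hessf x *v d))\<bar>
        = \<bar>(gradf (x + t *\<^sub>R d) - gradf x - hessf x *v (t *\<^sub>R d)) \<bullet> d\<bar>"
      by (simp add: inner_diff_left inner_diff_right matrix_vector_mult_scaleR inner_commute)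
    also have "\<dots> \<le> norm (gradf (x + t *\<^sub>R d) - gradf x - hessf x *v (t *\<^sub>R d)) * norm d"
      by (rule Cauchy_Schwarz_ineq2)
    also have "\<dots> \<le> (L / 2 * norm (t *\<^sub>R d) ^ 2) * norm d"
      by (intro mult_right_mono taylor2_grad[OF dg lip L]) auto
    also have "\<dots> = L * norm d ^ 3 * t^2 / 2" using t by (simp add: power2_eq_square power3_eq_cube)
    finally show "\<bar>gradf (x + t *\<^sub>R d) \<bullet> d - gradf x \<bullet> d - t * (d \<bullet> (hessf x *v d))\<bar> \<le> L * norm d ^ 3 * t^2 / 2" .
  qed simp
  then show ?thesis by (simp add: \<rho>_def B_def algebra_simps)
qed



lemma mixed:
  fixes f :: "real^'n \<Rightarrow> real"
  assumes df: "\<forall>y. (f has_derivative (\<lambda>h. gradf y \<bullet> h)) (at y)"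
    and dg: "\<forall>y. (gradf has_derivative (\<lambda>h. hessf y *v h)) (at y)"
    and lip: "\<forall>y z. mat_opnorm (hessf y - hessf z) \<le> L * norm (y - z)"
    and L: "L \<ge> 0"
  shows "\<bar>f (x + u + v) - f (x + u) - f (x + v) + f x - u \<bullet> (hessf x *v v)\<bar>
          \<le> (L / 2 * norm v ^ 2 + L * norm u * norm v) * norm u"
proof -
  define E where "E = (L / 2 * norm v ^ 2 + L * norm u * norm v) * norm u"
  define \<rho> where "\<rho> s = f ((x + v) + s *\<^sub>R u) - f (x + s *\<^sub>R u) - s * (u \<bullet> (hessf x *v v))" for s
  have "\<bar>\<rho> 1 - \<rho> 0\<bar> \<le> E * 1 - E * 0"
  proof (rule mono_bound[where \<rho>'="\<lambda>s. gradf ((x + v) + s *\<^sub>R u) \<bullet> u - gradf (x + s *\<^sub>R u) \<bullet> u - u \<bullet> (hessf x *v v)"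
        and B'="\<lambda>s. E"])
    fix s :: real assume s: "0 \<le> s" "s \<le> 1"
    show "(\<rho> has_real_derivative gradf ((x + v) + s *\<^sub>R u) \<bullet> u - gradf (x + s *\<^sub>R u) \<bullet> u - u \<bullet> (hessf x *v v)) (at s)"
      unfolding \<rho>_def
      by (rule derivative_eq_intros line_deriv_real df[rule_format] | simp)+
    show "((\<lambda>s. E * s) has_real_derivative E) (at s)"
      by (rule derivative_eq_intros | simp)+
    define p where "p = x + s *\<^sub>R u"
    have eq: "(x + v) + s *\<^sub>R u = p + v" by (simp add: p_def algebra_simps)
    have "norm (gradf (p + v) - gradf p - hessf x *v v)
        \<le> norm (gradf (p + v) - gradf p - hessf p *v v) + norm ((hessf p - hessf x) *v v)"
      by (rule order_trans[OF _ norm_triangle_ineq]) (simp add: algebra_simps)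
    also have "\<dots> \<le> L / 2 * norm v ^ 2 + mat_opnorm (hessf p - hessf x) * norm v"
      by (intro add_mono taylor2_grad[OF dg lip L] opnorm_bound)
    also have "\<dots> \<le> L / 2 * norm v ^ 2 + (L * norm u) * norm v"
    proof -
      have "mat_opnorm (hessf p - hessf x) \<le> L * norm (p - x)" using lip by auto
      also have "\<dots> = L * (s * norm u)" using s by (simp add: p_def)
      also have "\<dots> \<le> L * norm u" using s L by (intro mult_left_mono mult_left_le_one_le) auto
      finally show ?thesis by (intro add_mono mult_right_mono) auto
    qed
    finally have n: "norm (gradf (p + v) - gradf p - hessf x *v v) \<le> L / 2 * norm v ^ 2 + L * norm u * norm v"
      by simp
    have "\<bar>gradf ((x + v) + s *\<^sub>R u) \<bullet> u - gradf (x + s *\<^sub>R u) \<bullet> u - u \<bullet> (hessf x *v v)\<bar>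
       = \<bar>(gradf (p + v) - gradf p - hessf x *v v) \<bullet> u\<bar>"
      by (simp add: eq p_def[symmetric] inner_diff_left inner_diff_right inner_commute)
    also have "\<dots> \<le> norm (gradf (p + v) - gradf p - hessf x *v v) * norm u"
      by (rule Cauchy_Schwarz_ineq2)
    also have "\<dots> \<le> E" unfolding E_def using n by (intro mult_right_mono) auto
    finally show "\<bar>gradf ((x + v) + s *\<^sub>R u) \<bullet> u - gradf (x + s *\<^sub>R u) \<bullet> u - u \<bullet> (hessf x *v v)\<bar> \<le> E" .
  qed simp
  then show ?thesis by (simp add: \<rho>_def E_def algebra_simps)
qed

lemma hess_sym:
  fixes f :: "real^'n \<Rightarrow> real"
  assumes df: "\<forall>y. (f has_derivative (\<lambda>h. gradf y \<bullet> h)) (at y)"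
    and dg: "\<forall>y. (gradf has_derivative (\<lambda>h. hessf y *v h)) (at y)"
    and lip: "\<forall>y z. mat_opnorm (hessf y - hessf z) \<le> L * norm (y - z)"
    and L: "L \<ge> 0"
  shows "u \<bullet> (hessf x *v v) = v \<bullet> (hessf x *v u)"
proof (rule ccontr)
  define D where "D = u \<bullet> (hessf x *v v) - v \<bullet> (hessf x *v u)"
  define C where "C = (L / 2 * norm v ^ 2 + L * norm u * norm v) * norm u
                    + (L / 2 * norm u ^ 2 + L * norm v * norm u) * norm v"
  have C0: "C \<ge> 0" unfolding C_def using L by (intro add_nonneg_nonneg mult_nonneg_nonneg) auto
  have key: "\<bar>D\<bar> \<le> e * C" if e: "e > 0" for e :: real
  proof -
    let ?u = "e *\<^sub>R u" and ?v = "e *\<^sub>R v"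
    have m1: "\<bar>f (x + ?u + ?v) - f (x + ?u) - f (x + ?v) + f x - ?u \<bullet> (hessf x *v ?v)\<bar>
          \<le> (L / 2 * norm ?v ^ 2 + L * norm ?u * norm ?v) * norm ?u"
      by (rule mixed[OF df dg lip L])
    have m2: "\<bar>f (x + ?v + ?u) - f (x + ?v) - f (x + ?u) + f x - ?v \<bullet> (hessf x *v ?u)\<bar>
          \<le> (L / 2 * norm ?u ^ 2 + L * norm ?v * norm ?u) * norm ?v"
      by (rule mixed[OF df dg lip L])
    have xx: "x + ?v + ?u = x + ?u + ?v" by (simp add: algebra_simps)
    have "\<bar>?u \<bullet> (hessf x *v ?v) - ?v \<bullet> (hessf x *v ?u)\<bar> \<le>
        (L / 2 * norm ?v ^ 2 + L * norm ?u * norm ?v) * norm ?u + (L / 2 * norm ?u ^ 2 + L * norm ?v * norm ?u) * norm ?v"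
      using m1 m2 unfolding xx by linarith
    also have "\<dots> = e^3 * C" using e by (simp add: C_def algebra_simps power2_eq_square power3_eq_cube)
    moreover have "\<bar>?u \<bullet> (hessf x *v ?v) - ?v \<bullet> (hessf x *v ?u)\<bar> = e^2 * \<bar>D\<bar>"
      using e by (simp add: D_def matrix_vector_mult_scaleR power2_eq_square abs_mult right_diff_distrib[symmetric] mult.assoc[symmetric])
    ultimately have "e^2 * \<bar>D\<bar> \<le> e^2 * (e * C)"
      by (simp add: power2_eq_square power3_eq_cube mult.assoc)
    then show ?thesis using e by (simp add: mult_le_cancel_left)
  qed
  assume "u \<bullet> (hessf x *v v) \<noteq> v \<bullet> (hessf x *v u)"
  then have D0: "\<bar>D\<bar> > 0" by (simp add: D_def)
  have "\<bar>D\<bar> \<le> (\<bar>D\<bar> / (C + 1)) * C" using key[of "\<bar>D\<bar> / (C + 1)"] D0 C0 by simp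
  also have "\<dots> < \<bar>D\<bar>" using D0 C0 by (simp add: field_simps)
  finally show False by simp
qed



lemma lin_part:
  fixes b :: "real^'n" and q :: "real^'n \<Rightarrow> real"
  assumes D: "\<Delta> > 0"
    and bd: "\<forall>w. norm w \<le> \<Delta> \<longrightarrow> \<bar>a + b \<bullet> w + q w\<bar> \<le> K"
    and ev: "\<forall>w. q (- w) = q w"
  shows "\<Delta> * norm b \<le> K"
proof (cases "b = 0")
  case True
  then show ?thesis using bd[rule_format, of 0] D by auto
next
  case False
  define w where "w = (\<Delta> / norm b) *\<^sub>R b"
  have nw: "norm w = \<Delta>" using False D by (simp add: w_def)
  have "b \<bullet> w = \<Delta> * norm b" using False by (simp add: w_def power2_norm_eq_inner[symmetric] power2_eq_square)
  moreover have "\<bar>a + b \<bullet> w + q w\<bar> \<le> K" using bd nw by auto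
  moreover have "\<bar>a + b \<bullet> (-w) + q (-w)\<bar> \<le> K" using bd[rule_format, of "-w"] nw by simp
  ultimately show ?thesis using ev by (simp add: abs_le_iff)
qed

lemma quad_part:
  fixes b :: "real^'n" and A :: "real^'n^'n"
  assumes D: "\<Delta> > 0"
    and bd: "\<forall>w. norm w \<le> \<Delta> \<longrightarrow> \<bar>a + b \<bullet> w + (1/2) * (w \<bullet> (A *v w))\<bar> \<le> K"
  shows "\<bar>v \<bullet> (A *v v)\<bar> \<le> 4 * K / \<Delta>^2 * norm v ^ 2"
proof (cases "v = 0")
  case True
  then show ?thesis by simp
next
  case False
  define w where "w = (\<Delta> / norm v) *\<^sub>R v"
  have nw: "norm w = \<Delta>" using False D by (simp add: w_def)
  have ww: "w \<bullet> (A *v w) = (\<Delta> / norm v)^2 * (v \<bullet> (A *v v))"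
    by (simp add: w_def matrix_vector_mult_scaleR power2_eq_square)
  have mneg: "A *v (-w) = - (A *v w)"
    by (metis diff_0 matrix_vector_mult_diff_distrib matrix_vector_mult_0_right)
  have "\<bar>a + b \<bullet> w + (1/2) * (w \<bullet> (A *v w))\<bar> \<le> K" using bd nw by auto
  moreover have "\<bar>a + b \<bullet> (-w) + (1/2) * ((-w) \<bullet> (A *v (-w)))\<bar> \<le> K" using bd[rule_format, of "-w"] nw by simp
  moreover have "\<bar>a\<bar> \<le> K" using bd[rule_format, of 0] D by auto
  ultimately have "\<bar>w \<bullet> (A *v w)\<bar> \<le> 4 * K"
    using mneg by (simp add: abs_le_iff)
  then have "(\<Delta> / norm v)^2 * \<bar>v \<bullet> (A *v v)\<bar> \<le> 4 * K" by (simp add: ww abs_mult)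
  then show ?thesis using False D by (simp add: field_simps)
qed

lemma polar:
  fixes A :: "real^'n^'n"
  assumes sym: "\<And>u v. u \<bullet> (A *v v) = v \<bullet> (A *v u)"
    and q: "\<And>v. \<bar>v \<bullet> (A *v v)\<bar> \<le> c * norm v ^ 2"
    and c: "c \<ge> 0"
  shows "mat_opnorm A \<le> c"
  unfolding mat_opnorm_def
proof (rule onorm_le)
  fix v :: "real^'n"
  show "norm (A *v v) \<le> c * norm v"
  proof (cases "A *v v = 0")
    case True then show ?thesis using c by simp
  next
    case False
    then have v0: "v \<noteq> 0" by auto
    define u where "u = (norm v / norm (A *v v)) *\<^sub>R (A *v v)"
    have nu: "norm u = norm v" using False by (simp add: u_def)
    have uav: "u \<bullet> (A *v v) = norm v * norm (A *v v)"
      using False by (simp add: u_def power2_norm_eq_inner[symmetric] power2_eq_square)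
    have p: "(u + v) \<bullet> (A *v (u + v)) - (u - v) \<bullet> (A *v (u - v)) = 4 * (u \<bullet> (A *v v))"
      using sym[of v u]
      by (simp add: matrix_vector_right_distrib matrix_vector_mult_diff_distrib inner_add_left inner_add_right inner_diff_left inner_diff_right)
    have par: "norm (u + v) ^ 2 + norm (u - v) ^ 2 = 2 * norm u ^ 2 + 2 * norm v ^ 2"
      by (simp add: power2_norm_eq_inner inner_add_left inner_add_right inner_diff_left inner_diff_right inner_commute)
    have "4 * (norm v * norm (A *v v)) \<le> c * norm (u + v) ^ 2 + c * norm (u - v) ^ 2"
      using q[of "u + v"] q[of "u - v"] p uav by (auto simp add: abs_le_iff)
    also have "\<dots> = 4 * (norm v * (c * norm v))" using par nu by (simp add: distrib_left[symmetric] power2_eq_square)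
    finally show ?thesis using v0 by simp
  qed
qed



lemma mneg: "(A::real^'n^'n) *v (-w) = - (A *v w)"
  by (metis diff_0 matrix_vector_mult_diff_distrib matrix_vector_mult_0_right)

lemma model_shift:
  "qmodel c g H x (x + w) - f x - gf \<bullet> w = (c - f x) + (g - gf) \<bullet> w + (1/2) * (w \<bullet> (H *v w))"
  by (simp add: qmodel_def inner_diff_left)

lemma partA:
  fixes f :: "real^'n \<Rightarrow> real" and gradf :: "real^'n \<Rightarrow> real^'n" and H :: "real^'n^'n"
  assumes Dpos: "\<Delta> > 0"
    and df: "\<forall>y. (f has_derivative (\<lambda>h. gradf y \<bullet> h)) (at y)"
    and lip: "\<forall>y z. norm (gradf y - gradf z) \<le> Lg * norm (y - z)"
    and kp: "\<kappa> > 0"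
    and hyp: "\<forall>y\<in>cball x \<Delta>. \<bar>qmodel c g H x y - f x - gradf x \<bullet> (y - x)\<bar> \<le> \<kappa> * \<Delta>^2"
    and kH: "\<kappa>H \<ge> mat_opnorm H"
    and y: "y \<in> cball x \<Delta>"
  shows "\<bar>qmodel c g H x y - f y\<bar> \<le> (\<kappa> + Lg / 2) * \<Delta>^2
            \<and> norm (qmodel_grad g H x y - gradf y) \<le> (2*\<kappa> + Lg + 2*\<kappa>H) * \<Delta>"
proof -
  have L0: "Lg \<ge> 0"
  proof -
    have "0 \<le> Lg * norm (vec 1 - 0 :: real^'n)"
      using lip[rule_format, of "vec 1" 0] norm_ge_zero order_trans by blast
    then show ?thesis using vec1_ne[where 'n='n] by (simp add: zero_le_mult_iff)
  qed
  have kH0: "\<kappa>H \<ge> 0" using kH opnorm_nonneg order_trans by blast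
  define d where "d = y - x"
  have yd: "y = x + d" by (simp add: d_def)
  have nd: "norm d \<le> \<Delta>" using y by (simp add: d_def dist_norm norm_minus_commute)
  define b where "b = g - gradf x"
  have hyp': "\<forall>w. norm w \<le> \<Delta> \<longrightarrow> \<bar>(c - f x) + b \<bullet> w + (1/2) * (w \<bullet> (H *v w))\<bar> \<le> \<kappa> * \<Delta>^2"
  proof (intro allI impI)
    fix w :: "real^'n" assume "norm w \<le> \<Delta>"
    then have "x + w \<in> cball x \<Delta>" by (simp add: dist_norm)
    from hyp[rule_format, OF this] show "\<bar>(c - f x) + b \<bullet> w + (1/2) * (w \<bullet> (H *v w))\<bar> \<le> \<kappa> * \<Delta>^2"
      using model_shift[of c g H x w f "gradf x"] by (simp add: b_def)
  qed
  have "\<Delta> * norm b \<le> \<kappa> * \<Delta>^2"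
    by (rule lin_part[OF Dpos, where q="\<lambda>w. (1/2) * (w \<bullet> (H *v w))"]) (use hyp' in \<open>simp_all add: mneg\<close>)
  then have nb: "norm b \<le> \<kappa> * \<Delta>" using Dpos by (simp add: power2_eq_square)
  have v1: "\<bar>qmodel c g H x y - f x - gradf x \<bullet> d\<bar> \<le> \<kappa> * \<Delta>^2"
    using hyp y by (simp add: d_def)
  have v2: "\<bar>f (x + d) - f x - gradf x \<bullet> d\<bar> \<le> Lg / 2 * norm d ^ 2"
    by (rule taylor1[OF df lip])
  have "Lg / 2 * norm d ^ 2 \<le> Lg / 2 * \<Delta> ^ 2"
    using L0 nd by (intro mult_left_mono power_mono) auto
  moreover have v2': "\<bar>f y - f x - gradf x \<bullet> d\<bar> \<le> Lg / 2 * norm d ^ 2" using v2 yd by simp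
  moreover have "(\<kappa> + Lg / 2) * \<Delta>^2 = \<kappa> * \<Delta>^2 + Lg / 2 * \<Delta> ^ 2" by (simp add: algebra_simps)
  moreover have "\<bar>qmodel c g H x y - f y\<bar> \<le> \<bar>qmodel c g H x y - f x - gradf x \<bullet> d\<bar> + \<bar>f y - f x - gradf x \<bullet> d\<bar>"
    using abs_triangle_ineq4[of "qmodel c g H x y - f x - gradf x \<bullet> d" "f y - f x - gradf x \<bullet> d"] by simp
  ultimately have val: "\<bar>qmodel c g H x y - f y\<bar> \<le> (\<kappa> + Lg / 2) * \<Delta>^2"
    using v1 by linarith
  have "qmodel_grad g H x y - gradf y = b + H *v d + (gradf x - gradf y)"
    by (simp add: qmodel_grad_def b_def d_def)
  then have "norm (qmodel_grad g H x y - gradf y) \<le> norm b + norm (H *v d) + norm (gradf x - gradf y)"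
    by (simp only: ) (rule order_trans[OF norm_triangle_ineq], rule add_right_mono, rule norm_triangle_ineq)
  also have "\<dots> \<le> \<kappa> * \<Delta> + \<kappa>H * \<Delta> + Lg * \<Delta>"
  proof (intro add_mono nb)
    have "norm (H *v d) \<le> mat_opnorm H * norm d" by (rule opnorm_bound)
    also have "\<dots> \<le> \<kappa>H * \<Delta>" using kH nd kH0 opnorm_nonneg by (intro mult_mono) auto
    finally show "norm (H *v d) \<le> \<kappa>H * \<Delta>" .
    have "norm (gradf x - gradf y) \<le> Lg * norm (x - y)" using lip by auto
    also have "\<dots> \<le> Lg * \<Delta>" using L0 nd by (intro mult_left_mono) (auto simp: d_def norm_minus_commute)
    finally show "norm (gradf x - gradf y) \<le> Lg * \<Delta>" .
  qed
  also have "\<dots> \<le> (2*\<kappa> + Lg + 2*\<kappa>H) * \<Delta>" using kp kH0 Dpos by (simp add: algebra_simps)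
  finally show ?thesis using val by simp
qed



lemma partB:
  fixes f :: "real^'n \<Rightarrow> real" and gradf :: "real^'n \<Rightarrow> real^'n" and H :: "real^'n^'n"
    and hessf :: "real^'n \<Rightarrow> real^'n^'n"
  assumes symH: "transpose H = H"
    and Dpos: "\<Delta> > 0"
    and df: "\<forall>y. (f has_derivative (\<lambda>h. gradf y \<bullet> h)) (at y)"
    and dg: "\<forall>y. (gradf has_derivative (\<lambda>h. hessf y *v h)) (at y)"
    and lip: "\<forall>y z. mat_opnorm (hessf y - hessf z) \<le> Lh * norm (y - z)"
    and kp: "\<kappa> > 0"
    and hyp: "\<forall>y\<in>cball x \<Delta>. \<bar>qmodel c g H x y - f x - gradf x \<bullet> (y - x)
                          - (1/2) * ((y - x) \<bullet> (hessf x *v (y - x)))\<bar> \<le> \<kappa> * \<Delta>^3"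
    and y: "y \<in> cball x \<Delta>"
  shows "\<bar>qmodel c g H x y - f y\<bar> \<le> (\<kappa> + Lh / 6) * \<Delta>^3
            \<and> norm (qmodel_grad g H x y - gradf y) \<le> (34*\<kappa> + Lh / 2) * \<Delta>^2
            \<and> mat_opnorm (H - hessf y) \<le> (24*\<kappa> + Lh) * \<Delta>"
proof -
  have L0: "Lh \<ge> 0"
  proof -
    have "0 \<le> Lh * norm (vec 1 - 0 :: real^'n)"
      using lip[rule_format, of "vec 1" 0] opnorm_nonneg order_trans by blast
    then show ?thesis using vec1_ne[where 'n='n] by (simp add: zero_le_mult_iff)
  qed
  define d where "d = y - x"
  have yd: "y = x + d" by (simp add: d_def)
  have nd: "norm d \<le> \<Delta>" using y by (simp add: d_def dist_norm norm_minus_commute)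
  define b where "b = g - gradf x"
  define A where "A = H - hessf x"
  have hyp': "\<forall>w. norm w \<le> \<Delta> \<longrightarrow> \<bar>(c - f x) + b \<bullet> w + (1/2) * (w \<bullet> (A *v w))\<bar> \<le> \<kappa> * \<Delta>^3"
  proof (intro allI impI)
    fix w :: "real^'n" assume "norm w \<le> \<Delta>"
    then have "x + w \<in> cball x \<Delta>" by (simp add: dist_norm)
    from hyp[rule_format, OF this] show "\<bar>(c - f x) + b \<bullet> w + (1/2) * (w \<bullet> (A *v w))\<bar> \<le> \<kappa> * \<Delta>^3"
      using model_shift[of c g H x w f "gradf x"]
      by (simp add: b_def A_def matrix_vector_mult_diff_rdistrib inner_diff_right algebra_simps)
  qed
  have "\<Delta> * norm b \<le> \<kappa> * \<Delta>^3"
    by (rule lin_part[OF Dpos, where q="\<lambda>w. (1/2) * (w \<bullet> (A *v w))"]) (use hyp' in \<open>simp_all add: mneg\<close>)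
  then have nb: "norm b \<le> \<kappa> * \<Delta>^2" using Dpos by (simp add: power2_eq_square power3_eq_cube)
  have quad: "\<bar>v \<bullet> (A *v v)\<bar> \<le> (4 * \<kappa> * \<Delta>) * norm v ^ 2" for v
  proof -
    have "\<bar>v \<bullet> (A *v v)\<bar> \<le> 4 * (\<kappa> * \<Delta>^3) / \<Delta>^2 * norm v ^ 2"
      by (rule quad_part[OF Dpos hyp'])
    also have "4 * (\<kappa> * \<Delta>^3) / \<Delta>^2 = 4 * \<kappa> * \<Delta>" using Dpos by (simp add: power2_eq_square power3_eq_cube)
    finally show ?thesis .
  qed
  have symA: "u \<bullet> (A *v v) = v \<bullet> (A *v u)" for u v
  proof -
    have "u \<bullet> (H *v v) = v \<bullet> (H *v u)"
      by (metis dot_lmul_matrix inner_commute symH vector_transpose_matrix)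
    moreover have "u \<bullet> (hessf x *v v) = v \<bullet> (hessf x *v u)"
      by (rule hess_sym[OF df dg lip L0])
    ultimately show ?thesis by (simp add: A_def matrix_vector_mult_diff_rdistrib inner_diff_right)
  qed
  have nA: "mat_opnorm A \<le> 4 * \<kappa> * \<Delta>"
    by (rule polar[OF symA quad]) (use kp Dpos in simp)
  have v1: "\<bar>qmodel c g H x y - f x - gradf x \<bullet> d - (1/2) * (d \<bullet> (hessf x *v d))\<bar> \<le> \<kappa> * \<Delta>^3"
    using hyp y by (simp add: d_def)
  have v2: "\<bar>f (x + d) - f x - gradf x \<bullet> d - (1/2) * (d \<bullet> (hessf x *v d))\<bar> \<le> Lh / 6 * norm d ^ 3"
    by (rule taylor2[OF df dg lip L0])
  have "Lh / 6 * norm d ^ 3 \<le> Lh / 6 * \<Delta> ^ 3"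
    using L0 nd by (intro mult_left_mono power_mono) auto
  moreover have v2': "\<bar>f y - f x - gradf x \<bullet> d - (1/2) * (d \<bullet> (hessf x *v d))\<bar> \<le> Lh / 6 * norm d ^ 3"
    using v2 yd by simp
  moreover have "(\<kappa> + Lh / 6) * \<Delta>^3 = \<kappa> * \<Delta>^3 + Lh / 6 * \<Delta> ^ 3" by (simp add: algebra_simps)
  moreover have "\<bar>qmodel c g H x y - f y\<bar> \<le> \<bar>qmodel c g H x y - f x - gradf x \<bullet> d - (1/2) * (d \<bullet> (hessf x *v d))\<bar>
        + \<bar>f y - f x - gradf x \<bullet> d - (1/2) * (d \<bullet> (hessf x *v d))\<bar>"
    using abs_triangle_ineq4[of "qmodel c g H x y - f x - gradf x \<bullet> d - (1/2) * (d \<bullet> (hessf x *v d))"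
        "f y - f x - gradf x \<bullet> d - (1/2) * (d \<bullet> (hessf x *v d))"] by simp
  ultimately have val: "\<bar>qmodel c g H x y - f y\<bar> \<le> (\<kappa> + Lh / 6) * \<Delta>^3"
    using v1 by linarith
  have hes: "mat_opnorm (H - hessf y) \<le> (24*\<kappa> + Lh) * \<Delta>"
  proof -
    have "mat_opnorm (H - hessf y) \<le> 4 * \<kappa> * \<Delta> + Lh * \<Delta>"
      unfolding mat_opnorm_def
    proof (rule onorm_le)
      fix v :: "real^'n"
      have "(H - hessf y) *v v = A *v v + (hessf x - hessf y) *v v"
        by (simp add: A_def matrix_vector_mult_diff_rdistrib)
      then have "norm ((H - hessf y) *v v) \<le> norm (A *v v) + norm ((hessf x - hessf y) *v v)"
        by (simp add: norm_triangle_ineq)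
      also have "\<dots> \<le> mat_opnorm A * norm v + mat_opnorm (hessf x - hessf y) * norm v"
        by (intro add_mono opnorm_bound)
      also have "\<dots> \<le> (4 * \<kappa> * \<Delta>) * norm v + (Lh * \<Delta>) * norm v"
      proof (intro add_mono mult_right_mono nA norm_ge_zero)
        have "mat_opnorm (hessf x - hessf y) \<le> Lh * norm (x - y)" using lip by auto
        also have "\<dots> \<le> Lh * \<Delta>" using L0 nd by (intro mult_left_mono) (auto simp: d_def norm_minus_commute)
        finally show "mat_opnorm (hessf x - hessf y) \<le> Lh * \<Delta>" .
      qed
      finally show "norm ((H - hessf y) *v v) \<le> (4 * \<kappa> * \<Delta> + Lh * \<Delta>) * norm v"
        by (simp add: algebra_simps)
    qed
    also have "\<dots> \<le> (24*\<kappa> + Lh) * \<Delta>" using kp Dpos by (simp add: algebra_simps)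
    finally show ?thesis .
  qed
  have "qmodel_grad g H x y - gradf y = (b + A *v d) - (gradf (x + d) - gradf x - hessf x *v d)"
    by (simp add: qmodel_grad_def b_def A_def d_def matrix_vector_mult_diff_rdistrib)
  then have "norm (qmodel_grad g H x y - gradf y) \<le> norm b + norm (A *v d) + norm (gradf (x + d) - gradf x - hessf x *v d)"
    by (simp only: ) (rule order_trans[OF norm_triangle_ineq4], rule add_right_mono, rule norm_triangle_ineq)
  also have "\<dots> \<le> \<kappa> * \<Delta>^2 + 4 * \<kappa> * \<Delta>^2 + Lh / 2 * \<Delta>^2"
  proof (intro add_mono nb)
    have "norm (A *v d) \<le> mat_opnorm A * norm d" by (rule opnorm_bound)
    also have "\<dots> \<le> (4 * \<kappa> * \<Delta>) * \<Delta>" using nA nd kp Dpos opnorm_nonneg by (intro mult_mono) auto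
    finally show "norm (A *v d) \<le> 4 * \<kappa> * \<Delta>^2" by (simp add: power2_eq_square)
    have "norm (gradf (x + d) - gradf x - hessf x *v d) \<le> Lh / 2 * norm d ^ 2"
      by (rule taylor2_grad[OF dg lip L0])
    also have "\<dots> \<le> Lh / 2 * \<Delta> ^ 2" using L0 nd by (intro mult_left_mono power_mono) auto
    finally show "norm (gradf (x + d) - gradf x - hessf x *v d) \<le> Lh / 2 * \<Delta>^2" .
  qed
  also have "\<dots> \<le> (34*\<kappa> + Lh / 2) * \<Delta>^2" using kp Dpos by (simp add: algebra_simps)
  finally show ?thesis using val hes by simp
qed

theorem lemma5p1:
  fixes x g :: "real^'n" and c \<Delta> :: real and H :: "real^'n^'n"
  assumes symH: "transpose H = H"
    and Dpos: "\<Delta> > 0"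
  shows
   "(\<forall>(f :: real^'n \<Rightarrow> real) (gradf :: real^'n \<Rightarrow> real^'n) Lg \<kappa>.
       bdd_below (range f)
     \<and> (\<forall>y. (f has_derivative (\<lambda>h. gradf y \<bullet> h)) (at y))
     \<and> continuous_on UNIV gradf
     \<and> (\<forall>y z. norm (gradf y - gradf z) \<le> Lg * norm (y - z))
     \<and> \<kappa> > 0
     \<and> (\<forall>y\<in>cball x \<Delta>. \<bar>qmodel c g H x y - f x - gradf x \<bullet> (y - x)\<bar> \<le> \<kappa> * \<Delta>^2)
     \<longrightarrow> (\<forall>\<kappa>H. \<kappa>H \<ge> mat_opnorm H \<longrightarrow>
           (\<forall>y\<in>cball x \<Delta>.
              \<bar>qmodel c g H x y - f y\<bar> \<le> (\<kappa> + Lg / 2) * \<Delta>^2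
            \<and> norm (qmodel_grad g H x y - gradf y) \<le> (2*\<kappa> + Lg + 2*\<kappa>H) * \<Delta>)))
  \<and> (\<forall>(f :: real^'n \<Rightarrow> real) (gradf :: real^'n \<Rightarrow> real^'n) (hessf :: real^'n \<Rightarrow> real^'n^'n) Lh \<kappa>.
       bdd_below (range f)
     \<and> (\<forall>y. (f has_derivative (\<lambda>h. gradf y \<bullet> h)) (at y))
     \<and> (\<forall>y. (gradf has_derivative (\<lambda>h. hessf y *v h)) (at y))
     \<and> continuous_on UNIV hessf
     \<and> (\<forall>y z. mat_opnorm (hessf y - hessf z) \<le> Lh * norm (y - z))
     \<and> \<kappa> > 0
     \<and> (\<forall>y\<in>cball x \<Delta>. \<bar>qmodel c g H x y - f x - gradf x \<bullet> (y - x)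
                          - (1/2) * ((y - x) \<bullet> (hessf x *v (y - x)))\<bar> \<le> \<kappa> * \<Delta>^3)
     \<longrightarrow> (\<forall>y\<in>cball x \<Delta>.
              \<bar>qmodel c g H x y - f y\<bar> \<le> (\<kappa> + Lh / 6) * \<Delta>^3
            \<and> norm (qmodel_grad g H x y - gradf y) \<le> (34*\<kappa> + Lh / 2) * \<Delta>^2
            \<and> mat_opnorm (H - hessf y) \<le> (24*\<kappa> + Lh) * \<Delta>))"
  apply (rule conjI)
  subgoal
    apply (intro allI impI ballI)
    apply (elim conjE)
    apply (rule partA[OF Dpos])
          apply assumption+
    done
  subgoal
    apply (intro allI impI ballI)
    apply (elim conjE)
    apply (rule partB[OF symH Dpos])
          apply assumption+
    done
  done

end
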